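(* Let $A=\{a_1,\dots,a_k\}$ be finite and $u_1,u_2:A\to\mathbb{R}$. In every subgame-perfect Nash equilibrium $\sigma=(\sigma_1,\sigma_2)$ of the two-player Price \& Choose game, player 1's price vector is $\sigma_1=p^*$, where $p^*_j=u_2(a_j)-\mathrm{Avg}_2$ for all $j$ (the unique price vector in $P$ making player 2 indifferent among all options).
   Context: Two players with quasi-linear utilities: if option $a\in A$ is selected and player $i$ receives transfer $t_i$, player $i$'s utility is $u_i(a)+t_i$. Let $P=\{p\in\mathbb{R}^k:\sum_{j=1}^k p_j=0\}$ and $\mathrm{Avg}_2=\frac1k\sum_{j}u_2(a_j)$. The Price \& Choose game: player 1 chooses $p\in P$; then player 2, having observed $p$, chooses $a_j\in A$ and pays $p_j$ to player 1; payoffs $g_1(p,a_j)=u_1(a_j)+p_j$, $g_2(p,a_j)=u_2(a_j)-p_j$. A pure strategy profile $\sigma=(\sigma_1,\sigma_2)$, $\sigma_1\in P$, $\sigma_2:P\to A$, is a subgame-perfect Nash equilibrium if $\sigma_2(p)\in\arg\max_{a}g_2(p,a)$ for every $p\in P$ and $g_1(\sigma_1,\sigma_2(\sigma_1))\ge g_1(p,\sigma_2(p))$ for all $p\in P$. *)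

theory Defs
  imports Complex_Main
begin

text \<open>Options A = UNIV of a finite type 'a (so k = CARD('a)); a price vector
  assigns a real price to each option, i.e. p_j = p a_j.\<close>

definition PriceSet :: "('a::finite \<Rightarrow> real) set" where
  "PriceSet = {p. (\<Sum>a\<in>UNIV. p a) = 0}"

definition Avg2 :: "('a::finite \<Rightarrow> real) \<Rightarrow> real" where
  "Avg2 u2 = (\<Sum>a\<in>UNIV. u2 a) / real (card (UNIV :: 'a set))"

definition g1 :: "('a \<Rightarrow> real) \<Rightarrow> ('a \<Rightarrow> real) \<Rightarrow> 'a \<Rightarrow> real" where
  "g1 u1 p a = u1 a + p a"

definition g2 :: "('a \<Rightarrow> real) \<Rightarrow> ('a \<Rightarrow> real) \<Rightarrow> 'a \<Rightarrow> real" where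
  "g2 u2 p a = u2 a - p a"

text \<open>Pure-strategy subgame-perfect Nash equilibrium of Price and Choose.
  sigma2 is a function on price vectors; only its values on PriceSet matter.\<close>
definition is_SPNE ::
  "('a::finite \<Rightarrow> real) \<Rightarrow> ('a \<Rightarrow> real) \<Rightarrow> ('a \<Rightarrow> real) \<Rightarrow> (('a \<Rightarrow> real) \<Rightarrow> 'a) \<Rightarrow> bool" where
  "is_SPNE u1 u2 \<sigma>1 \<sigma>2 \<longleftrightarrow>
     \<sigma>1 \<in> PriceSet \<and>
     (\<forall>p\<in>PriceSet. \<forall>b. g2 u2 p b \<le> g2 u2 p (\<sigma>2 p)) \<and>
     (\<forall>p\<in>PriceSet. g1 u1 p (\<sigma>2 p) \<le> g1 u1 \<sigma>1 (\<sigma>2 \<sigma>1))"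

end

theory Submission
  imports Defs
begin

theorem mainTheorem3:
  fixes u1 u2 :: "'a::finite \<Rightarrow> real"
    and \<sigma>1 :: "'a \<Rightarrow> real" and \<sigma>2 :: "('a \<Rightarrow> real) \<Rightarrow> 'a"
  assumes "is_SPNE u1 u2 \<sigma>1 \<sigma>2"
  shows "\<sigma>1 = (\<lambda>a. u2 a - Avg2 u2)"
proof (rule ccontr)
  assume ne: "\<sigma>1 \<noteq> (\<lambda>a. u2 a - Avg2 u2)"
  define n where "n = real (card (UNIV :: 'a set))"
  have npos: "n > 0" unfolding n_def by (simp add: finite_UNIV_card_ge_0)
  have s1: "(\<Sum>a\<in>UNIV. \<sigma>1 a) = 0" using assms by (simp add: is_SPNE_def PriceSet_def)
  have br: "\<And>p b. p \<in> PriceSet \<Longrightarrow> g2 u2 p b \<le> g2 u2 p (\<sigma>2 p)" using assms by (simp add: is_SPNE_def)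
  have dev: "\<And>p. p \<in> PriceSet \<Longrightarrow> g1 u1 p (\<sigma>2 p) \<le> g1 u1 \<sigma>1 (\<sigma>2 \<sigma>1)" using assms by (simp add: is_SPNE_def)
  define b where "b = \<sigma>2 \<sigma>1"
  define q where "q a = \<sigma>1 a - u2 a + Avg2 u2" for a
  have sumu: "(\<Sum>a\<in>UNIV. u2 a) = n * Avg2 u2" using npos unfolding Avg2_def n_def by simp
  have sq: "(\<Sum>a\<in>UNIV. q a) = 0"
    unfolding q_def by (simp add: sum.distrib sum_subtractf s1 sumu n_def)
  have qmin: "q b \<le> q a" for a
  proof -
    have "\<sigma>1 \<in> PriceSet" using assms by (simp add: is_SPNE_def)
    from br[OF this, of a] show ?thesis unfolding b_def q_def g2_def by simp
  qed
  have qb: "q b < 0"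
  proof (rule ccontr)
    assume "\<not> q b < 0"
    hence "\<forall>a. q a \<ge> 0" using qmin by (meson le_less_trans not_le)
    hence "\<forall>a. q a = 0" using sq sum_nonneg_eq_0_iff[of UNIV q] by auto
    hence "\<sigma>1 = (\<lambda>a. u2 a - Avg2 u2)" unfolding q_def by (auto simp: algebra_simps)
    thus False using ne by simp
  qed
  define d where "d = - q b"
  have dpos: "d > 0" using qb d_def by simp
  define p where "p a = u2 a - Avg2 u2 + d / n - (if a = b then d else 0)" for a
  have "(\<Sum>a\<in>UNIV. p a) = 0"
    unfolding p_def using npos
    by (simp add: sum.distrib sum_subtractf sumu n_def)
  hence pP: "p \<in> PriceSet" by (simp add: PriceSet_def)
  have "\<sigma>2 p = b"
  proof (rule ccontr)
    assume "\<sigma>2 p \<noteq> b"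
    thus False using br[OF pP, of b] dpos by (simp add: g2_def p_def)
  qed
  hence "u1 b + p b \<le> u1 b + \<sigma>1 b" using dev[OF pP] by (simp add: g1_def b_def)
  hence "d / n \<le> 0" unfolding p_def d_def q_def by simp
  thus False using dpos npos by (simp add: divide_le_0_iff)
qed

end
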